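(* Let $u,v\in P$ with $u<v$. Then the relations $<$ and ${\rm Low}$ are primitive positive definable in $(P;{\rm Betw},\bot,u,v)$.
   Context: $(P;\leq)$ is the random partial order (Fraïssé limit of all finite partial orders); $x<y$ means $x\leq y\wedge x\neq y$; $x\bot y$ means $x,y$ incomparable; $z\bot xy$ abbreviates $z\bot x\wedge z\bot y$. ${\rm Betw}(x,y,z):=(x<y\wedge y<z)\vee(z<y\wedge y<x)$; ${\rm Low}(x,y,z):=(x<y\wedge z\bot xy)\vee(x<z\wedge y\bot xz)$. $(P;{\rm Betw},\bot,u,v)$ is the structure with relations ${\rm Betw}$, $\bot$ and constants (singleton unary relations) $u,v$. Primitive positive definable: definable by $\exists\bar y$ (conjunction of atomic formulas). *)

theory Defs
  imports Main "HOL-Library.Countable_Set"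
begin

definition partial_order_on_type :: "('a \<Rightarrow> 'a \<Rightarrow> bool) \<Rightarrow> bool" where
  "partial_order_on_type le \<longleftrightarrow>
     (\<forall>x. le x x) \<and> (\<forall>x y. le x y \<and> le y x \<longrightarrow> x = y) \<and>
     (\<forall>x y z. le x y \<and> le y z \<longrightarrow> le x z)"

definition all_finite_pos_embed :: "('a \<Rightarrow> 'a \<Rightarrow> bool) \<Rightarrow> bool" where
  "all_finite_pos_embed le \<longleftrightarrow>
     (\<forall>(n::nat) (R::nat \<Rightarrow> nat \<Rightarrow> bool).
        ((\<forall>i<n. R i i) \<and> (\<forall>i<n. \<forall>j<n. R i j \<and> R j i \<longrightarrow> i = j) \<and>
         (\<forall>i<n. \<forall>j<n. \<forall>k<n. R i j \<and> R j k \<longrightarrow> R i k))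
        \<longrightarrow> (\<exists>f::nat \<Rightarrow> 'a. inj_on f {..<n} \<and>
               (\<forall>i<n. \<forall>j<n. R i j \<longleftrightarrow> le (f i) (f j))))"

definition homogeneous_po :: "('a \<Rightarrow> 'a \<Rightarrow> bool) \<Rightarrow> bool" where
  "homogeneous_po le \<longleftrightarrow>
     (\<forall>(A::'a set) (g::'a \<Rightarrow> 'a). finite A \<and> inj_on g A \<and>
        (\<forall>x\<in>A. \<forall>y\<in>A. le x y \<longleftrightarrow> le (g x) (g y))
        \<longrightarrow> (\<exists>h. bij h \<and> (\<forall>x y. le x y \<longleftrightarrow> le (h x) (h y)) \<and> (\<forall>x\<in>A. h x = g x)))"

text \<open>The random partial order: the Fraisse limit of the class of all finite partial orders,
  i.e. the countable homogeneous partial order into which every finite partial order embeds.\<close>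
definition random_po :: "('a \<Rightarrow> 'a \<Rightarrow> bool) \<Rightarrow> bool" where
  "random_po le \<longleftrightarrow> countable (UNIV :: 'a set) \<and> partial_order_on_type le \<and>
     all_finite_pos_embed le \<and> homogeneous_po le"

definition lt :: "('a \<Rightarrow> 'a \<Rightarrow> bool) \<Rightarrow> 'a \<Rightarrow> 'a \<Rightarrow> bool" where
  "lt le x y \<longleftrightarrow> le x y \<and> x \<noteq> y"

definition incomp :: "('a \<Rightarrow> 'a \<Rightarrow> bool) \<Rightarrow> 'a \<Rightarrow> 'a \<Rightarrow> bool" where
  "incomp le x y \<longleftrightarrow> \<not> le x y \<and> \<not> le y x"

definition Betw :: "('a \<Rightarrow> 'a \<Rightarrow> bool) \<Rightarrow> 'a \<Rightarrow> 'a \<Rightarrow> 'a \<Rightarrow> bool" where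
  "Betw le x y z \<longleftrightarrow> (lt le x y \<and> lt le y z) \<or> (lt le z y \<and> lt le y x)"

definition Low :: "('a \<Rightarrow> 'a \<Rightarrow> bool) \<Rightarrow> 'a \<Rightarrow> 'a \<Rightarrow> 'a \<Rightarrow> bool" where
  "Low le x y z \<longleftrightarrow>
     (lt le x y \<and> incomp le z x \<and> incomp le z y) \<or> (lt le x z \<and> incomp le y x \<and> incomp le y z)"

text \<open>Variables are natural numbers; constants u, v are singleton unary relations.\<close>
datatype ppf =
    PTrue
  | PEq nat nat
  | PBetw nat nat nat
  | PPerp nat nat
  | PU nat
  | PV nat
  | PAnd ppf ppf
  | PEx nat ppf

fun pp_holds :: "('a \<Rightarrow> 'a \<Rightarrow> bool) \<Rightarrow> 'a \<Rightarrow> 'a \<Rightarrow> (nat \<Rightarrow> 'a) \<Rightarrow> ppf \<Rightarrow> bool" where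
  "pp_holds le u v s PTrue = True"
| "pp_holds le u v s (PEq i j) = (s i = s j)"
| "pp_holds le u v s (PBetw i j k) = Betw le (s i) (s j) (s k)"
| "pp_holds le u v s (PPerp i j) = incomp le (s i) (s j)"
| "pp_holds le u v s (PU i) = (s i = u)"
| "pp_holds le u v s (PV i) = (s i = v)"
| "pp_holds le u v s (PAnd \<phi> \<psi>) = (pp_holds le u v s \<phi> \<and> pp_holds le u v s \<psi>)"
| "pp_holds le u v s (PEx i \<phi>) = (\<exists>a. pp_holds le u v (s(i := a)) \<phi>)"

definition pp_definable ::
  "('a \<Rightarrow> 'a \<Rightarrow> bool) \<Rightarrow> 'a \<Rightarrow> 'a \<Rightarrow> nat \<Rightarrow> ('a list \<Rightarrow> bool) \<Rightarrow> bool" where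
  "pp_definable le u v k R \<longleftrightarrow>
     (\<exists>\<phi>. \<forall>s. pp_holds le u v s \<phi> \<longleftrightarrow> R (map s [0..<k]))"

end

theory Submission
  imports Defs
begin


lemma po_facts:
  assumes "random_po le"
  shows "\<And>x. le x x" "\<And>x y. le x y \<Longrightarrow> le y x \<Longrightarrow> x = y"
    "\<And>x y z. le x y \<Longrightarrow> le y z \<Longrightarrow> le x z"
  using assms unfolding random_po_def partial_order_on_type_def by blast+

lemma extend:
  assumes rp: "random_po le" and fin: "finite A" and LA: "L \<subseteq> A" and HA: "H \<subseteq> A"
    and disj: "L \<inter> H = {}"
    and Ldown: "\<forall>a\<in>A. \<forall>b\<in>L. le a b \<longrightarrow> a \<in> L"
    and Hup: "\<forall>a\<in>H. \<forall>b\<in>A. le a b \<longrightarrow> b \<in> H"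
    and LH: "\<forall>l\<in>L. \<forall>h\<in>H. le l h"
  shows "\<exists>p. p \<notin> A \<and> (\<forall>a\<in>A. le a p \<longleftrightarrow> a \<in> L) \<and> (\<forall>a\<in>A. le p a \<longleftrightarrow> a \<in> H)"
proof -
  note po = po_facts[OF rp]
  obtain as where as: "set as = A" "distinct as" using finite_distinct_list[OF fin] by blast
  define n where "n = length as"
  define R where "R i j \<longleftrightarrow> (i<n \<and> j<n \<and> le (as!i) (as!j)) \<or> (i=n \<and> j=n) \<or>
      (i<n \<and> j=n \<and> as!i \<in> L) \<or> (i=n \<and> j<n \<and> as!j \<in> H)" for i j
  have mem: "i < n \<Longrightarrow> as!i \<in> A" for i using as n_def by auto
  have R1: "\<forall>i<Suc n. R i i" unfolding R_def using po(1) by auto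
  have R2: "\<forall>i<Suc n. \<forall>j<Suc n. R i j \<and> R j i \<longrightarrow> i = j"
  proof (intro allI impI)
    fix i j assume "i < Suc n" "j < Suc n" "R i j \<and> R j i"
    then show "i = j" unfolding R_def
      using po(2) as(2) n_def disj nth_eq_iff_index_eq by (auto, blast+)
  qed
  have R3: "\<forall>i<Suc n. \<forall>j<Suc n. \<forall>k<Suc n. R i j \<and> R j k \<longrightarrow> R i k"
  proof (intro allI impI)
    fix i j k assume "i < Suc n" "j < Suc n" "k < Suc n" "R i j \<and> R j k"
    then have i: "i < n \<or> i = n" and j: "j < n \<or> j = n" and k: "k < n \<or> k = n" by auto
    show "R i k"
    proof (cases "i < n")
      case ii: True
      show ?thesis
      proof (cases "j < n")
        case jj: True
        show ?thesis
        proof (cases "k < n")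
          case True
          then show ?thesis using ii jj \<open>R i j \<and> R j k\<close> po(3) unfolding R_def by auto
        next
          case False
          then have "k = n" using k by simp
          then have "as!j \<in> L" "le (as!i) (as!j)" using ii jj \<open>R i j \<and> R j k\<close> unfolding R_def by auto
          then show ?thesis using Ldown mem ii \<open>k = n\<close> unfolding R_def by blast
        qed
      next
        case False
        then have jn: "j = n" using j by simp
        then have iL: "as!i \<in> L" using ii \<open>R i j \<and> R j k\<close> unfolding R_def by auto
        show ?thesis
        proof (cases "k < n")
          case True
          then have "as!k \<in> H" using jn \<open>R i j \<and> R j k\<close> unfolding R_def by auto
          then show ?thesis using LH iL ii True unfolding R_def by blast
        next
          case False
          then show ?thesis using k ii iL unfolding R_def by auto
        qed
      qed
    next
      case False
      then have inn: "i = n" using i by simp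
      show ?thesis
      proof (cases "j < n")
        case jj: True
        then have jH: "as!j \<in> H" using inn \<open>R i j \<and> R j k\<close> unfolding R_def by auto
        show ?thesis
        proof (cases "k < n")
          case True
          then have "le (as!j) (as!k)" using jj \<open>R i j \<and> R j k\<close> unfolding R_def by auto
          then show ?thesis using Hup jH mem True inn unfolding R_def by blast
        next
          case False
          then show ?thesis using k inn unfolding R_def by auto
        qed
      next
        case False
        then have "j = n" using j by simp
        then show ?thesis using inn \<open>R i j \<and> R j k\<close> by simp
      qed
    qed
  qed
  obtain f :: "nat \<Rightarrow> 'a" where f: "inj_on f {..<Suc n}"
    "\<forall>i<Suc n. \<forall>j<Suc n. R i j \<longleftrightarrow> le (f i) (f j)"
    using rp R1 R2 R3 unfolding random_po_def all_finite_pos_embed_def by blast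
  define B where "B = f ` {..<n}"
  define g where "g b = as ! (inv_into {..<n} f b)" for b
  have finj: "inj_on f {..<n}" using f(1) by (rule inj_on_subset) auto
  have gf: "i < n \<Longrightarrow> g (f i) = as ! i" for i
    unfolding g_def using finj by (simp add: inv_into_f_f)
  have "inj_on g B"
  proof
    fix b c assume "b \<in> B" "c \<in> B" "g b = g c"
    then obtain i j where "i<n" "j<n" "b = f i" "c = f j" unfolding B_def by auto
    then show "b = c" using \<open>g b = g c\<close> gf as(2) n_def nth_eq_iff_index_eq by metis
  qed
  moreover have "\<forall>x\<in>B. \<forall>y\<in>B. le x y \<longleftrightarrow> le (g x) (g y)"
  proof (intro ballI)
    fix b c assume "b \<in> B" "c \<in> B"
    then obtain i j where ij: "i<n" "j<n" "b = f i" "c = f j" unfolding B_def by auto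
    have "le b c \<longleftrightarrow> R i j" using f(2) ij by simp
    also have "\<dots> \<longleftrightarrow> le (as!i) (as!j)" using ij R_def by simp
    finally show "le b c \<longleftrightarrow> le (g b) (g c)" using gf ij by simp
  qed
  ultimately have hh: "finite B \<and> inj_on g B \<and> (\<forall>x\<in>B. \<forall>y\<in>B. le x y \<longleftrightarrow> le (g x) (g y))"
    unfolding B_def by simp
  have hom: "homogeneous_po le" using rp unfolding random_po_def by blast
  obtain h where h: "bij h" "\<forall>x y. le x y \<longleftrightarrow> le (h x) (h y)" "\<forall>x\<in>B. h x = g x"
    using hom[unfolded homogeneous_po_def, rule_format, OF hh] by blast
  have hf: "i < n \<Longrightarrow> h (f i) = as ! i" for i using h(3) gf B_def by auto
  define p where "p = h (f n)"
  have "p \<notin> A"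
  proof
    assume "p \<in> A"
    then obtain i where "i < n" "as ! i = p" using as n_def by (metis in_set_conv_nth)
    then have "h (f i) = h (f n)" using hf p_def by simp
    then have "f i = f n" using h(1) bij_is_inj injD by metis
    then show False using f(1) \<open>i<n\<close> inj_on_def by (metis lessThan_iff less_Suc_eq less_irrefl)
  qed
  moreover have "\<forall>a\<in>A. le a p \<longleftrightarrow> a \<in> L"
  proof
    fix a assume "a \<in> A"
    then obtain i where i: "i < n" "as ! i = a" using as n_def by (metis in_set_conv_nth)
    have "le a p \<longleftrightarrow> le (f i) (f n)" using h(2) hf i p_def by metis
    also have "\<dots> \<longleftrightarrow> R i n" using f(2) i by auto
    finally show "le a p \<longleftrightarrow> a \<in> L" using i R_def by auto
  qed
  moreover have "\<forall>a\<in>A. le p a \<longleftrightarrow> a \<in> H"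
  proof
    fix a assume "a \<in> A"
    then obtain i where i: "i < n" "as ! i = a" using as n_def by (metis in_set_conv_nth)
    have "le p a \<longleftrightarrow> le (f n) (f i)" using h(2) hf i p_def by metis
    also have "\<dots> \<longleftrightarrow> R n i" using f(2) i by auto
    finally show "le p a \<longleftrightarrow> a \<in> H" using i R_def by auto
  qed
  ultimately show ?thesis by blast
qed



definition LTF :: "nat \<Rightarrow> nat \<Rightarrow> nat \<Rightarrow> ppf" where
"LTF a b k = PEx k (PEx (k+1) (PEx (k+2) (PEx (k+3) (PEx (k+4) (PEx (k+5)
  (PAnd (PBetw a b k) (PAnd (PBetw b k (k+1)) (PAnd (PBetw (k+2) k (k+1))
  (PAnd (PBetw (k+3) (k+4) (k+5)) (PAnd (PU (k+4)) (PAnd (PV (k+5))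
  (PAnd (PBetw (k+3) (k+2) k) (PPerp (k+2) (k+4))))))))))))))"

lemma LTF_sem:
  assumes "a < k" "b < k"
  shows "pp_holds le u v s (LTF a b k) \<longleftrightarrow>
    (\<exists>t s' x' z. Betw le (s a) (s b) t \<and> Betw le (s b) t s' \<and> Betw le x' t s' \<and>
       Betw le z u v \<and> Betw le z x' t \<and> incomp le x' u)"
  using assms unfolding LTF_def by (simp add: fun_upd_def)

lemma LT_sound:
  assumes rp: "random_po le" and uv: "lt le u v"
    and h: "Betw le x y t" "Betw le y t s'" "Betw le x' t s'"
       "Betw le z u v" "Betw le z x' t" "incomp le x' u"
  shows "lt le x y"
proof -
  note po = po_facts[OF rp]
  have "lt le z u" using h(4) uv po(2) unfolding Betw_def lt_def by blast
  then have "lt le x' t" using h(5,6) po(3) unfolding Betw_def lt_def incomp_def by blast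
  then have "lt le t s'" using h(3) po(2) unfolding Betw_def lt_def by blast
  then have "lt le y t" using h(2) po(2) unfolding Betw_def lt_def by blast
  then show ?thesis using h(1) po(2) unfolding Betw_def lt_def by blast
qed

lemma ext_up:
  assumes rp: "random_po le" and "finite A" "b \<in> A"
  shows "\<exists>p. p \<notin> A \<and> (\<forall>a\<in>A. le a p \<longleftrightarrow> le a b) \<and> (\<forall>a\<in>A. \<not> le p a)"
proof -
  note po = po_facts[OF rp]
  have "\<exists>p. p \<notin> A \<and> (\<forall>a\<in>A. le a p \<longleftrightarrow> a \<in> {a\<in>A. le a b}) \<and> (\<forall>a\<in>A. le p a \<longleftrightarrow> a \<in> {})"
    apply (rule extend[OF rp assms(2)])
    using po(3) by blast+
  then show ?thesis by auto
qed

lemma ext_down: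
  assumes rp: "random_po le" and "finite A" "B \<subseteq> A"
  shows "\<exists>p. p \<notin> A \<and> (\<forall>a\<in>A. \<not> le a p) \<and> (\<forall>a\<in>A. le p a \<longleftrightarrow> (\<exists>b\<in>B. le b a))"
proof -
  note po = po_facts[OF rp]
  have "\<exists>p. p \<notin> A \<and> (\<forall>a\<in>A. le a p \<longleftrightarrow> a \<in> {}) \<and> (\<forall>a\<in>A. le p a \<longleftrightarrow> a \<in> {a\<in>A. \<exists>b\<in>B. le b a})"
    apply (rule extend[OF rp assms(2)])
    using po(3) assms(3) by blast+
  then show ?thesis by auto
qed

lemma ext_between:
  assumes rp: "random_po le" and "finite A" "x \<in> A" "y \<in> A" "lt le x y"
  shows "\<exists>p. p \<notin> A \<and> (\<forall>a\<in>A. le a p \<longleftrightarrow> le a x) \<and> (\<forall>a\<in>A. le p a \<longleftrightarrow> le y a)"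
proof -
  note po = po_facts[OF rp]
  have "\<exists>p. p \<notin> A \<and> (\<forall>a\<in>A. le a p \<longleftrightarrow> a \<in> {a\<in>A. le a x}) \<and> (\<forall>a\<in>A. le p a \<longleftrightarrow> a \<in> {a\<in>A. le y a})"
    apply (rule extend[OF rp assms(2)])
    using po(2,3) assms(5) unfolding lt_def by blast+
  then show ?thesis by auto
qed

lemma LT_complete:
  assumes rp: "random_po le" and uv: "lt le u v" and xy: "lt le x y"
  shows "\<exists>t s' x' z. Betw le x y t \<and> Betw le y t s' \<and> Betw le x' t s' \<and>
       Betw le z u v \<and> Betw le z x' t \<and> incomp le x' u"
proof -
  note po = po_facts[OF rp]
  obtain t where t: "t \<notin> {x,y,u,v}" "\<forall>a\<in>{x,y,u,v}. le a t \<longleftrightarrow> le a y"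
      "\<forall>a\<in>{x,y,u,v}. \<not> le t a"
    using ext_up[OF rp, of "{x,y,u,v}" y] by auto
  obtain s' where s: "s' \<notin> {t}" "\<forall>a\<in>{t}. le a s' \<longleftrightarrow> le a t"
      "\<forall>a\<in>{t}. \<not> le s' a"
    using ext_up[OF rp, of "{t}" t] by auto
  obtain x' where x': "x' \<notin> {t,u}" "\<forall>a\<in>{t,u}. \<not> le a x'"
      "\<forall>a\<in>{t,u}. le x' a \<longleftrightarrow> (\<exists>b\<in>{t}. le b a)"
    using ext_down[OF rp, of "{t,u}" "{t}"] by auto
  obtain z where z: "z \<notin> {u,x'}" "\<forall>a\<in>{u,x'}. \<not> le a z"
      "\<forall>a\<in>{u,x'}. le z a \<longleftrightarrow> (\<exists>b\<in>{u,x'}. le b a)"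
    using ext_down[OF rp, of "{u,x'}" "{u,x'}"] by auto
  have 1: "lt le y t" "lt le x t" using t xy po(1) unfolding lt_def by auto
  have 2: "lt le t s'" using s po(1) by (auto simp: lt_def)
  have 3: "lt le x' t" using x' po(1) by (auto simp: lt_def)
  have 4: "incomp le x' u" using x' t by (auto simp: incomp_def)
  have 5: "lt le z u" "lt le z x'" using z po(1) by (auto simp: lt_def)
  show ?thesis using 1 2 3 4 5 xy uv unfolding Betw_def by blast
qed

lemma LTF_iff:
  assumes rp: "random_po le" and uv: "lt le u v" and "a < k" "b < k"
  shows "pp_holds le u v s (LTF a b k) \<longleftrightarrow> lt le (s a) (s b)"
  unfolding LTF_sem[OF assms(3,4)] using LT_sound[OF rp uv] LT_complete[OF rp uv] by metis

definition LOWF :: ppf where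
"LOWF = PAnd (PPerp 1 2) (PEx 3 (PEx 4 (PEx 5 (PEx 6 (PAnd (PBetw 3 0 4) (PAnd (PBetw 5 0 4)
   (PAnd (PBetw 3 0 6) (PAnd (LTF 3 1 7) (PAnd (LTF 4 2 7) (PAnd (PPerp 5 1) (PPerp 6 2)))))))))))"

lemma LOWF_sem:
  assumes rp: "random_po le" and uv: "lt le u v"
  shows "pp_holds le u v s LOWF \<longleftrightarrow> incomp le (s 1) (s 2) \<and>
    (\<exists>p q p' q'. Betw le p (s 0) q \<and> Betw le p' (s 0) q \<and> Betw le p (s 0) q' \<and>
       lt le p (s 1) \<and> lt le q (s 2) \<and> incomp le p' (s 1) \<and> incomp le q' (s 2))"
  unfolding LOWF_def by (simp add: LTF_iff[OF rp uv])

lemma Low_sound: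
  assumes rp: "random_po le"
    and h: "incomp le y z" "Betw le p x q" "Betw le p' x q" "Betw le p x q'"
       "lt le p y" "lt le q z" "incomp le p' y" "incomp le q' z"
  shows "Low le x y z"
proof -
  note po = po_facts[OF rp]
  have c: "(lt le p x \<and> lt le x q) \<or> (lt le q x \<and> lt le x p)" using h(2) unfolding Betw_def by blast
  show ?thesis
  proof (cases "lt le p x \<and> lt le x q")
    case True
    then have "lt le p' x" "lt le x q'" using h(3,4) po(2) unfolding Betw_def lt_def by blast+
    then have "lt le x z" "incomp le y x" using True h po(2,3) unfolding lt_def incomp_def by metis+
    then show ?thesis unfolding Low_def using h(1) unfolding incomp_def by blast
  next
    case False
    then have F: "lt le q x \<and> lt le x p" using c by blast
    then have "lt le q' x" "lt le x p'" using h(3,4) po(2) unfolding Betw_def lt_def by blast+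
    then have "lt le x y" "incomp le z x" using F h po(2,3) unfolding lt_def incomp_def by metis+
    then show ?thesis unfolding Low_def using h(1) unfolding incomp_def by blast
  qed
qed

lemma Low_complete1:
  assumes rp: "random_po le" and h: "lt le x y" "incomp le z x" "incomp le z y"
  shows "\<exists>p q p' q'. Betw le p x q \<and> Betw le p' x q \<and> Betw le p x q' \<and>
       lt le p y \<and> lt le q z \<and> incomp le p' y \<and> incomp le q' z"
proof -
  note po = po_facts[OF rp]
  obtain p where p: "p \<notin> {x,y}" "\<forall>a\<in>{x,y}. le a p \<longleftrightarrow> le a x" "\<forall>a\<in>{x,y}. le p a \<longleftrightarrow> le y a"
    using ext_between[OF rp, of "{x,y}" x y] h(1) by auto
  obtain q where q: "q \<notin> {x,z}" "\<forall>a\<in>{x,z}. \<not> le a q"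
      "\<forall>a\<in>{x,z}. le q a \<longleftrightarrow> (\<exists>b\<in>{x,z}. le b a)"
    using ext_down[OF rp, of "{x,z}" "{x,z}"] by auto
  obtain p' where p': "p' \<notin> {x,y}" "\<forall>a\<in>{x,y}. le a p' \<longleftrightarrow> le a x" "\<forall>a\<in>{x,y}. \<not> le p' a"
    using ext_up[OF rp, of "{x,y}" x] by auto
  obtain q' where q': "q' \<notin> {x,z}" "\<forall>a\<in>{x,z}. \<not> le a q'"
      "\<forall>a\<in>{x,z}. le q' a \<longleftrightarrow> (\<exists>b\<in>{x}. le b a)"
    using ext_down[OF rp, of "{x,z}" "{x}"] by auto
  have 1: "lt le x p" "lt le p y" using p po(1) by (auto simp: lt_def)
  have 2: "lt le q x" "lt le q z" using q po(1) by (auto simp: lt_def)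
  have 3: "lt le x p'" "incomp le p' y" using p' po(1,2) h(1) by (auto simp: lt_def incomp_def)
  have 4: "lt le q' x" "incomp le q' z" using q' po(1) h(2) by (auto simp: lt_def incomp_def)
  show ?thesis unfolding Betw_def using 1 2 3 4 by blast
qed

lemma Betw_sym: "Betw le a b c \<longleftrightarrow> Betw le c b a"
  unfolding Betw_def by blast

lemma incomp_sym: "incomp le a b \<longleftrightarrow> incomp le b a"
  unfolding incomp_def by blast

lemma Low_complete:
  assumes rp: "random_po le" and h: "Low le x y z"
  shows "incomp le y z \<and> (\<exists>p q p' q'. Betw le p x q \<and> Betw le p' x q \<and> Betw le p x q' \<and>
       lt le p y \<and> lt le q z \<and> incomp le p' y \<and> incomp le q' z)"
proof (cases "lt le x y \<and> incomp le z x \<and> incomp le z y")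
  case True
  then show ?thesis using Low_complete1[OF rp] incomp_sym by metis
next
  case False
  then have F: "lt le x z" "incomp le y x" "incomp le y z" using h unfolding Low_def by blast+
  obtain p q p' q' where "Betw le p x q \<and> Betw le p' x q \<and> Betw le p x q' \<and>
       lt le p z \<and> lt le q y \<and> incomp le p' z \<and> incomp le q' y"
    using Low_complete1[OF rp F] by blast
  then show ?thesis using F Betw_sym by metis
qed

theorem lemma60:
  fixes le :: "'a \<Rightarrow> 'a \<Rightarrow> bool" and u v :: 'a
  assumes "random_po le"
    and "lt le u v"
  shows "pp_definable le u v 2 (\<lambda>xs. lt le (xs ! 0) (xs ! 1)) \<and>
         pp_definable le u v 3 (\<lambda>xs. Low le (xs ! 0) (xs ! 1) (xs ! 2))"
proof
  show "pp_definable le u v 2 (\<lambda>xs. lt le (xs ! 0) (xs ! 1))"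
    unfolding pp_definable_def
    by (rule exI[of _ "LTF 0 1 2"]) (simp add: LTF_iff[OF assms] upt_rec)
  have "pp_holds le u v s LOWF \<longleftrightarrow> Low le (s 0) (s 1) (s 2)" for s
    unfolding LOWF_sem[OF assms] using Low_sound[OF assms(1)] Low_complete[OF assms(1)] by metis
  then show "pp_definable le u v 3 (\<lambda>xs. Low le (xs ! 0) (xs ! 1) (xs ! 2))"
    unfolding pp_definable_def
    by (intro exI[of _ LOWF]) (simp add: upt_rec numeral_2_eq_2)
qed

end
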